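(* If a graph $G$ of order $n(G)$ contains a universal vertex, then $\mathrm{sg_e}(G) \ge n(G)-1$. Moreover, if $G$ has exactly one universal vertex, then $\mathrm{sg_e}(G) = n(G)-1$.
   Context: All graphs are finite, simple and connected. A vertex $u$ is universal if $\deg_G(u) = n(G)-1$. A set $S \subseteq V(G)$ is a strong edge geodetic set of $G$ if one can assign to every unordered pair $\{u,v\}$ of distinct vertices of $S$ either one shortest $u,v$-path $P_{uv}$ in $G$ or no path, in such a way that every edge of $G$ lies on at least one of the assigned paths. The strong edge geodetic number $\mathrm{sg_e}(G)$ is the minimum cardinality of a strong edge geodetic set of $G$. *)

theory Defs
  imports Main
begin

definition simple_graph :: "'a set \<Rightarrow> 'a set set \<Rightarrow> bool" where
  "simple_graph V E \<longleftrightarrow> finite V \<and>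
     (\<forall>e\<in>E. \<exists>u v. e = {u, v} \<and> u \<noteq> v \<and> u \<in> V \<and> v \<in> V)"

definition is_walk :: "'a set set \<Rightarrow> 'a list \<Rightarrow> 'a \<Rightarrow> 'a \<Rightarrow> bool" where
  "is_walk E p u v \<longleftrightarrow> p \<noteq> [] \<and> hd p = u \<and> last p = v \<and>
     (\<forall>i. Suc i < length p \<longrightarrow> {p ! i, p ! Suc i} \<in> E)"

definition connected_graph :: "'a set \<Rightarrow> 'a set set \<Rightarrow> bool" where
  "connected_graph V E \<longleftrightarrow> simple_graph V E \<and>
     (\<forall>u\<in>V. \<forall>v\<in>V. \<exists>p. is_walk E p u v)"

text \<open>Shortest u,v-path: a u,v-walk with the minimum number of vertices
  (hence edges); such a walk is automatically a path.\<close>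
definition shortest_path :: "'a set set \<Rightarrow> 'a list \<Rightarrow> 'a \<Rightarrow> 'a \<Rightarrow> bool" where
  "shortest_path E p u v \<longleftrightarrow> is_walk E p u v \<and>
     (\<forall>q. is_walk E q u v \<longrightarrow> length p \<le> length q)"

definition path_edges :: "'a list \<Rightarrow> 'a set set" where
  "path_edges p = {{p ! i, p ! Suc i} | i. Suc i < length p}"

text \<open>Strong edge geodetic set: to each unordered pair {u,v} of distinct vertices
  of S assign either one shortest u,v-path or nothing, covering all edges.\<close>
definition strong_edge_geodetic :: "'a set \<Rightarrow> 'a set set \<Rightarrow> 'a set \<Rightarrow> bool" where
  "strong_edge_geodetic V E S \<longleftrightarrow> S \<subseteq> V \<and>
     (\<exists>P :: 'a set \<Rightarrow> 'a list option.
        (\<forall>u\<in>S. \<forall>v\<in>S. u \<noteq> v \<longrightarrow>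
           (case P {u, v} of None \<Rightarrow> True
            | Some p \<Rightarrow> shortest_path E p u v \<or> shortest_path E p v u)) \<and>
        (\<forall>e\<in>E. \<exists>u\<in>S. \<exists>v\<in>S. u \<noteq> v \<and>
           (\<exists>p. P {u, v} = Some p \<and> e \<in> path_edges p)))"

definition sge :: "'a set \<Rightarrow> 'a set set \<Rightarrow> nat" where
  "sge V E = (LEAST k. \<exists>S. strong_edge_geodetic V E S \<and> card S = k)"

definition degree :: "'a set \<Rightarrow> 'a set set \<Rightarrow> 'a \<Rightarrow> nat" where
  "degree V E u = card {v \<in> V. {u, v} \<in> E}"

definition universal :: "'a set \<Rightarrow> 'a set set \<Rightarrow> 'a \<Rightarrow> bool" where
  "universal V E u \<longleftrightarrow> u \<in> V \<and> degree V E u = card V - 1"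

end

theory Submission
  imports Defs
begin

lemma edge_props: "simple_graph V E \<Longrightarrow> e\<in>E \<Longrightarrow> \<exists>u v. e={u,v}\<and>u\<noteq>v\<and>u\<in>V\<and>v\<in>V"
  unfolding simple_graph_def by blast

lemma no_loop: "simple_graph V E \<Longrightarrow> {a,a} \<notin> E"
  unfolding simple_graph_def by (metis doubleton_eq_iff insert_absorb2)

lemma univ_adj:
  assumes G: "simple_graph V E" and U: "universal V E w" and x: "x\<in>V" "x\<noteq>w"
  shows "{w,x}\<in>E"
proof -
  have fin: "finite V" using G unfolding simple_graph_def by auto
  have w: "w \<in> V" using U unfolding universal_def by auto
  have sub: "{v \<in> V. {w, v} \<in> E} \<subseteq> V - {w}" using no_loop[OF G] by auto
  have "card {v \<in> V. {w, v} \<in> E} = card (V - {w})"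
    using U w fin unfolding universal_def degree_def by simp
  hence "{v \<in> V. {w, v} \<in> E} = V - {w}"
    using sub fin by (meson card_subset_eq finite_Diff)
  thus ?thesis using x by auto
qed

lemma pe2: "path_edges [a,b] = {{a,b}}"
  unfolding path_edges_def by auto

lemma pe3: "path_edges [a,c,b] = {{a,c},{c,b}}"
  unfolding path_edges_def
proof (rule set_eqI, rule iffI)
  fix x assume "x \<in> {{[a, c, b] ! i, [a, c, b] ! Suc i} |i. Suc i < length [a, c, b]}"
  then obtain i where "x = {[a, c, b] ! i, [a, c, b] ! Suc i}" "i = 0 \<or> i = 1" by (auto simp: less_Suc_eq)
  then show "x \<in> {{a,c},{c,b}}" by auto
next
  fix x assume "x \<in> {{a,c},{c,b}}"
  then show "x \<in> {{[a, c, b] ! i, [a, c, b] ! Suc i} |i. Suc i < length [a, c, b]}"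
  proof
    assume "x = {a,c}"
    then have "x = {[a, c, b] ! 0, [a, c, b] ! Suc 0} \<and> Suc 0 < length [a,c,b]" by simp
    then show ?thesis by blast
  next
    assume "x \<in> {{c,b}}"
    then have "x = {[a, c, b] ! 1, [a, c, b] ! Suc 1} \<and> Suc 1 < length [a,c,b]" by simp
    then show ?thesis by blast
  qed
qed

lemma walk_ge2: assumes w: "is_walk E p u v" and uv: "u\<noteq>v" shows "length p \<ge> 2"
proof (rule ccontr)
  assume "\<not> length p \<ge> 2"
  moreover have "p \<noteq> []" "hd p = u" "last p = v" using w unfolding is_walk_def by auto
  moreover have "length p > 0" using \<open>p \<noteq> []\<close> by simp
  ultimately have "length p = Suc 0" by arith
  then obtain x where "p = [x]" using length_Suc_conv[of p 0] by auto
  then show False using \<open>hd p = u\<close> \<open>last p = v\<close> uv by simp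
qed

lemma walk_2: assumes w: "is_walk E p u v" and l: "length p = 2" shows "{u,v}\<in>E \<and> p = [u,v]"
proof -
  obtain x y where p: "p = [x,y]" using l
    by (auto simp: numeral_2_eq_2 length_Suc_conv)
  have "{p!0, p! Suc 0}\<in>E" "hd p = u" "last p = v" using w l unfolding is_walk_def by auto
  then show ?thesis using p by simp
qed

lemma walk_3: assumes w: "is_walk E p u v" and l: "length p = 3" shows "\<exists>c. p = [u,c,v]"
proof -
  obtain x y z where p: "p = [x,y,z]" using l
    by (auto simp: numeral_3_eq_3 length_Suc_conv)
  have "hd p = u" "last p = v" using w unfolding is_walk_def by auto
  then show ?thesis using p by simp
qed

lemma walk_e: assumes "{u,v}\<in>E" shows "is_walk E [u,v] u v"
  unfolding is_walk_def
proof (intro conjI allI impI)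
  fix i assume "Suc i < length [u,v]"
  then have "i = 0" by simp
  then show "{[u, v] ! i, [u, v] ! Suc i} \<in> E" using assms by simp
qed simp_all

lemma walk_p3: assumes "{u,w}\<in>E" "{w,v}\<in>E" shows "is_walk E [u,w,v] u v"
  unfolding is_walk_def
proof (intro conjI allI impI)
  fix i assume "Suc i < length [u,w,v]"
  then have "i = 0 \<or> i = 1" by (auto simp: less_Suc_eq)
  then show "{[u, w, v] ! i, [u, w, v] ! Suc i} \<in> E" using assms by (elim disjE) simp_all
qed simp_all

lemma sp_edge: assumes a: "{u,v}\<in>E" "u\<noteq>v" shows "shortest_path E [u,v] u v"
  unfolding shortest_path_def
proof (intro conjI allI impI)
  show "is_walk E [u,v] u v" by (rule walk_e[OF a(1)])
  fix q assume q: "is_walk E q u v"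
  show "length [u,v] \<le> length q" using walk_ge2[OF q a(2)] by simp
qed

lemma sp_two: assumes a: "{u,w}\<in>E" "{w,v}\<in>E" "{u,v}\<notin>E" "u\<noteq>v"
  shows "shortest_path E [u,w,v] u v"
  unfolding shortest_path_def
proof (intro conjI allI impI)
  show "is_walk E [u,w,v] u v" by (rule walk_p3[OF a(1) a(2)])
  fix q assume q: "is_walk E q u v"
  have "length q \<ge> 2" using walk_ge2[OF q a(4)] .
  moreover have "length q \<noteq> 2" using walk_2[OF q] a by blast
  ultimately show "length [u,w,v] \<le> length q" by simp
qed

lemma key:
  assumes G: "simple_graph V E" and U: "universal V E w"
    and sp: "shortest_path E p a b" and ab: "a\<in>V" "b\<in>V" "a\<noteq>b"
    and e: "{w,x} \<in> path_edges p" and x: "x\<noteq>w"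
  shows "x = a \<or> x = b"
proof -
  have wk: "is_walk E p a b" and mn: "\<And>q. is_walk E q a b \<Longrightarrow> length p \<le> length q"
    using sp unfolding shortest_path_def by auto
  have g2: "length p \<ge> 2" using walk_ge2[OF wk ab(3)] .
  show ?thesis
  proof (cases "{a,b}\<in>E")
    case True
    then have "length p \<le> 2" using mn[OF walk_e[OF True]] by simp
    then have "length p = 2" using g2 by simp
    then have "p = [a,b]" using walk_2[OF wk] by blast
    then have "{w,x} = {a,b}" using e by (simp add: pe2)
    then show ?thesis unfolding doubleton_eq_iff by blast
  next
    case False
    have aw: "a \<noteq> w"
    proof
      assume "a = w" then have "{a,b}\<in>E" using univ_adj[OF G U ab(2)] ab(3) by simp
      with False show False by simp
    qed
    have bw: "b \<noteq> w"
    proof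
      assume "b = w" then have "{b,a}\<in>E" using univ_adj[OF G U ab(1)] ab(3) by simp
      with False show False by (simp add: insert_commute)
    qed
    have e1: "{a,w}\<in>E" using univ_adj[OF G U ab(1) aw] by (simp add: insert_commute)
    have e2: "{w,b}\<in>E" using univ_adj[OF G U ab(2) bw] .
    have "length p \<le> length [a,w,b]" by (rule mn[OF walk_p3[OF e1 e2]])
    then have "length p \<le> 3" by simp
    moreover have "length p \<noteq> 2" using walk_2[OF wk] False by blast
    ultimately have "length p = 3" using g2 by simp
    then obtain c where "p = [a,c,b]" using walk_3[OF wk] by blast
    then have "{w,x} = {a,c} \<or> {w,x} = {c,b}" using e by (simp add: pe3)
    then show ?thesis using x aw bw unfolding doubleton_eq_iff by blast
  qed
qed

lemma lower:
  assumes G: "simple_graph V E" and U: "universal V E w"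
    and S: "strong_edge_geodetic V E S"
  shows "V - {w} \<subseteq> S"
proof
  fix x assume "x \<in> V - {w}"
  then have xV: "x\<in>V" and xw: "x\<noteq>w" by auto
  have ed: "{w,x}\<in>E" using univ_adj[OF G U xV xw] .
  from S obtain P where SV: "S \<subseteq> V" and
    val: "\<forall>u\<in>S. \<forall>v\<in>S. u \<noteq> v \<longrightarrow>
           (case P {u, v} of None \<Rightarrow> True
            | Some p \<Rightarrow> shortest_path E p u v \<or> shortest_path E p v u)"
    and cov: "\<forall>e\<in>E. \<exists>u\<in>S. \<exists>v\<in>S. u \<noteq> v \<and>
           (\<exists>p. P {u, v} = Some p \<and> e \<in> path_edges p)"
    unfolding strong_edge_geodetic_def by blast
  obtain u v p where uv: "u\<in>S" "v\<in>S" "u\<noteq>v" "P {u,v} = Some p" "{w,x} \<in> path_edges p"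
    using cov ed by blast
  have "shortest_path E p u v \<or> shortest_path E p v u" using val uv by force
  then show "x \<in> S"
  proof
    assume "shortest_path E p u v"
    then have "x = u \<or> x = v" using key[OF G U _ _ _ _ uv(5) xw] uv SV by blast
    then show ?thesis using uv by blast
  next
    assume "shortest_path E p v u"
    then have "x = v \<or> x = u" using key[OF G U _ _ _ _ uv(5) xw] uv SV by blast
    then show ?thesis using uv by blast
  qed
qed

lemma nonadj_not_w:
  assumes G: "simple_graph V E" and U: "universal V E w"
    and ab: "a\<in>V" "b\<in>V" "a\<noteq>b" and ne: "{a,b}\<notin>E"
  shows "a \<noteq> w" "b \<noteq> w" "{a,w}\<in>E" "{w,b}\<in>E"
proof -
  show aw: "a \<noteq> w"
  proof
    assume "a = w" then have "{a,b}\<in>E" using univ_adj[OF G U ab(2)] ab(3) by simp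
    with ne show False by simp
  qed
  show bw: "b \<noteq> w"
  proof
    assume "b = w" then have "{b,a}\<in>E" using univ_adj[OF G U ab(1)] ab(3) by simp
    with ne show False by (simp add: insert_commute)
  qed
  show "{a,w}\<in>E" using univ_adj[OF G U ab(1) aw] by (simp add: insert_commute)
  show "{w,b}\<in>E" using univ_adj[OF G U ab(2) bw] .
qed

lemma construct:
  assumes G: "simple_graph V E" and U: "universal V E w"
    and SV: "S \<subseteq> V" and VS: "V - {w} \<subseteq> S"
    and ny: "\<forall>x\<in>V-{w}. w\<in>S \<or> (\<exists>y\<in>S. y\<noteq>x \<and> {x,y}\<notin>E)"
  shows "strong_edge_geodetic V E S"
proof -
  define Q where "Q = (\<lambda>a b. if {a,b}\<in>E then [a,b] else [a,w,b])"
  define P where "P = (\<lambda>e. Some (SOME p. \<exists>a b. e={a,b} \<and> a \<noteq> b \<and> p = Q a b))"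
  have Pp: "\<exists>a b. {u,v}={a,b} \<and> a\<noteq>b \<and> P {u,v} = Some (Q a b)" if "u\<noteq>v" for u v
  proof -
    have "\<exists>p. \<exists>a b. {u,v}={a,b} \<and> a \<noteq> b \<and> p = Q a b" using that by blast
    from someI_ex[OF this] show ?thesis unfolding P_def by simp
  qed
  have val: "\<forall>u\<in>S. \<forall>v\<in>S. u \<noteq> v \<longrightarrow>
           (case P {u, v} of None \<Rightarrow> True
            | Some p \<Rightarrow> shortest_path E p u v \<or> shortest_path E p v u)"
  proof (intro ballI impI)
    fix u v assume uv: "u\<in>S" "v\<in>S" "u\<noteq>v"
    obtain a b where ab: "{u,v}={a,b}" "a\<noteq>b" "P {u,v} = Some (Q a b)" using Pp[OF uv(3)] by blast
    have or: "(a = u \<and> b = v) \<or> (a = v \<and> b = u)" using ab(1) unfolding doubleton_eq_iff by blast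
    have aV: "a\<in>V" and bV: "b\<in>V" using or uv SV by blast+
    have sp: "shortest_path E (Q a b) a b"
    proof (cases "{a,b}\<in>E")
      case True
      then have "Q a b = [a,b]" unfolding Q_def by simp
      then show ?thesis using sp_edge[OF True ab(2)] by simp
    next
      case False
      note nw = nonadj_not_w[OF G U aV bV ab(2) False]
      have "Q a b = [a,w,b]" unfolding Q_def using False by simp
      then show ?thesis using sp_two[OF nw(3) nw(4) False ab(2)] by simp
    qed
    have "shortest_path E (Q a b) u v \<or> shortest_path E (Q a b) v u" using sp or by blast
    then show "case P {u, v} of None \<Rightarrow> True
            | Some p \<Rightarrow> shortest_path E p u v \<or> shortest_path E p v u"
      using ab(3) by simp
  qed
  have direct: "\<exists>u\<in>S. \<exists>v\<in>S. u \<noteq> v \<and> (\<exists>p. P {u, v} = Some p \<and> {a,b} \<in> path_edges p)"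
    if ab0: "a\<in>S" "b\<in>S" "a\<noteq>b" "{a,b}\<in>E" for a b
  proof -
    obtain c d where cd: "{a,b}={c,d}" "c\<noteq>d" "P {a,b} = Some (Q c d)" using Pp[OF ab0(3)] by blast
    have "{c,d}\<in>E" using cd(1) ab0(4) by simp
    then have "Q c d = [c,d]" unfolding Q_def by simp
    then have "{a,b} \<in> path_edges (Q c d)" using cd(1) by (simp add: pe2)
    then show ?thesis using ab0 cd(3) by blast
  qed
  have cov: "\<forall>e\<in>E. \<exists>u\<in>S. \<exists>v\<in>S. u \<noteq> v \<and> (\<exists>p. P {u, v} = Some p \<and> e \<in> path_edges p)"
  proof
    fix e assume eE: "e\<in>E"
    then obtain a b where ab: "e={a,b}" "a\<noteq>b" "a\<in>V" "b\<in>V" using edge_props[OF G] by blast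
    show "\<exists>u\<in>S. \<exists>v\<in>S. u \<noteq> v \<and> (\<exists>p. P {u, v} = Some p \<and> e \<in> path_edges p)"
    proof (cases "a \<noteq> w \<and> b \<noteq> w")
      case True
      then have "a\<in>S" "b\<in>S" using VS ab by blast+
      then show ?thesis using direct[of a b] ab eE by simp
    next
      case False
      then obtain x where ex: "e = {w,x}" "x\<noteq>w" "x\<in>V"
      proof -
        have "a = w \<or> b = w" using False by simp
        then show ?thesis
        proof
          assume "a = w"
          then show ?thesis using that[of b] ab by simp
        next
          assume "b = w"
          then show ?thesis using that[of a] ab by (simp add: insert_commute)
        qed
      qed
      have xS: "x\<in>S" using VS ex by blast
      show ?thesis
      proof (cases "w\<in>S")
        case True then show ?thesis using direct[of w x] ex xS eE by simp
      next
        case False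
        then obtain y where y: "y\<in>S" "y\<noteq>x" "{x,y}\<notin>E" using ny ex by blast
        obtain c d where cd: "{x,y}={c,d}" "c\<noteq>d" "P {x,y} = Some (Q c d)" using Pp[OF y(2)[symmetric]] by blast
        have "{c,d}\<notin>E" using cd(1) y(3) by simp
        then have Qc: "Q c d = [c,w,d]" unfolding Q_def by simp
        have or: "(c = x \<and> d = y) \<or> (c = y \<and> d = x)" using cd(1) unfolding doubleton_eq_iff by blast
        have "{c,w} = e \<or> {w,d} = e" using or ex(1) by (auto simp: insert_commute)
        then have "e \<in> path_edges (Q c d)" unfolding Qc pe3 by blast
        moreover have "x \<noteq> y" using y(2) by simp
        ultimately show ?thesis using cd(3) xS y(1) by blast
      qed
    qed
  qed
  show ?thesis unfolding strong_edge_geodetic_def using SV val cov by blast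
qed

theorem mainTheorem11:
  fixes V :: "'a set" and E :: "'a set set"
  assumes "connected_graph V E"
    and "\<exists>u. universal V E u"
  shows "sge V E \<ge> card V - 1 \<and>
         ((\<exists>!u. universal V E u) \<longrightarrow> sge V E = card V - 1)"
proof -
  have G: "simple_graph V E" using assms(1) unfolding connected_graph_def by auto
  have fin: "finite V" using G unfolding simple_graph_def by auto
  obtain w where U: "universal V E w" using assms(2) by blast
  have wV: "w\<in>V" using U unfolding universal_def by auto
  have lb: "card V - 1 \<le> card S" if "strong_edge_geodetic V E S" for S
  proof -
    have "S \<subseteq> V" using that unfolding strong_edge_geodetic_def by auto
    then have "finite S" using fin finite_subset by blast
    then have "card (V - {w}) \<le> card S" using lower[OF G U that] card_mono by blast
    then show ?thesis using wV fin by simp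
  qed
  have exV: "strong_edge_geodetic V E V"
    using construct[OF G U] wV by blast
  have "\<exists>S. strong_edge_geodetic V E S \<and> card S = card V" using exV by blast
  then have ex: "\<exists>k S. strong_edge_geodetic V E S \<and> card S = k" by blast
  obtain S0 where S0: "strong_edge_geodetic V E S0" "card S0 = sge V E"
    using LeastI_ex[OF ex] unfolding sge_def by blast
  have ge: "sge V E \<ge> card V - 1" using lb[OF S0(1)] S0(2) by simp
  moreover have "sge V E = card V - 1" if uq: "\<exists>!u. universal V E u"
  proof -
    have nu: "\<And>x. x\<in>V \<Longrightarrow> x\<noteq>w \<Longrightarrow> \<not> universal V E x" using uq U by blast
    have ny: "\<forall>x\<in>V-{w}. w\<in>V-{w} \<or> (\<exists>y\<in>V-{w}. y\<noteq>x \<and> {x,y}\<notin>E)"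
    proof
      fix x assume x: "x\<in>V-{w}"
      show "w\<in>V-{w} \<or> (\<exists>y\<in>V-{w}. y\<noteq>x \<and> {x,y}\<notin>E)"
      proof (rule ccontr)
        assume nt: "\<not> ?thesis"
        have all: "\<forall>y\<in>V. y\<noteq>x \<longrightarrow> {x,y}\<in>E"
        proof (intro ballI impI)
          fix y assume y: "y\<in>V" "y\<noteq>x"
          show "{x,y}\<in>E"
          proof (cases "y = w")
            case True
            have "{w,x}\<in>E" using univ_adj[OF G U] x by blast
            then show ?thesis using True by (simp add: insert_commute)
          next
            case False
            then show ?thesis using nt y by blast
          qed
        qed
        have "{v \<in> V. {x, v} \<in> E} = V - {x}" using all no_loop[OF G] by auto
        then have "universal V E x" unfolding universal_def degree_def using x fin by simp
        then show False using nu x by blast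
      qed
    qed
    have "strong_edge_geodetic V E (V-{w})" using construct[OF G U _ _ ny] by blast
    moreover have "card (V-{w}) = card V - 1" using wV fin by simp
    ultimately have "sge V E \<le> card V - 1" unfolding sge_def by (metis (mono_tags, lifting) Least_le)
    then show ?thesis using ge by simp
  qed
  ultimately show ?thesis by blast
qed

end
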